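(* Let $n\ge 3$ and $k\ge 1$. Let $G=C_n$ be the cycle $g_1g_2\cdots g_ng_1$ and let $H=C_{3k+2}$ have vertex set $\{1,2,\dots,3k+2\}$ with $i$ adjacent to $i+1$ for $1\le i\le 3k+1$ and $3k+2$ adjacent to $1$. Define $f\colon V(G)\to V(H)$ by $f(g_i)=1$ if $i\equiv 1\pmod 4$, $f(g_i)=2$ if $i\equiv 2\pmod 4$, and $f(g_i)=3$ otherwise ($i\in\{1,\dots,n\}$). Then \[ \gamma(G\otimes_f H)\le kn+\left\lfloor \frac n2\right\rfloor+\left\lceil \frac n4\right\rceil-\left\lfloor \frac n4\right\rfloor . \]
   Context: $\gamma$ denotes the domination number. For graphs $G,H$ and a function $f\colon V(G)\to V(H)$, the Sierpiński product $G\otimes_f H$ is the graph with vertex set $V(G)\times V(H)$ and edges of two types: (type 1) $(g,h)(g,h')$ for every $g\in V(G)$ and every edge $hh'\in E(H)$; (type 2) $(g,f(g'))(g',f(g))$ for every edge $gg'\in E(G)$. *)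

theory Defs
  imports Complex_Main
begin

text \<open>Simple graphs are given by a vertex set V and a symmetric irreflexive adjacency relation E.\<close>

definition dominating_set :: "'a set \<Rightarrow> ('a \<Rightarrow> 'a \<Rightarrow> bool) \<Rightarrow> 'a set \<Rightarrow> bool" where
  "dominating_set V E D \<longleftrightarrow> D \<subseteq> V \<and> (\<forall>v\<in>V. v \<in> D \<or> (\<exists>u\<in>D. E u v))"

definition domination_number :: "'a set \<Rightarrow> ('a \<Rightarrow> 'a \<Rightarrow> bool) \<Rightarrow> nat" where
  "domination_number V E = Min {card D | D. dominating_set V E D}"

definition sierpinski_vertices :: "'a set \<Rightarrow> 'b set \<Rightarrow> ('a \<times> 'b) set" where
  "sierpinski_vertices VG VH = VG \<times> VH"

definition sierpinski_adj ::
  "('a \<Rightarrow> 'a \<Rightarrow> bool) \<Rightarrow> ('b \<Rightarrow> 'b \<Rightarrow> bool) \<Rightarrow> ('a \<Rightarrow> 'b) \<Rightarrow> 'a \<times> 'b \<Rightarrow> 'a \<times> 'b \<Rightarrow> bool" where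
  "sierpinski_adj EG EH f x y \<longleftrightarrow>
     (fst x = fst y \<and> EH (snd x) (snd y)) \<or>
     (EG (fst x) (fst y) \<and> snd x = f (fst y) \<and> snd y = f (fst x))"

definition cycle_vertices :: "nat \<Rightarrow> nat set" where
  "cycle_vertices m = {1..m}"

definition cycle_adj :: "nat \<Rightarrow> nat \<Rightarrow> nat \<Rightarrow> bool" where
  "cycle_adj m i j \<longleftrightarrow> i \<in> {1..m} \<and> j \<in> {1..m} \<and>
     (j = i + 1 \<or> i = j + 1 \<or> (i = m \<and> j = 1) \<or> (i = 1 \<and> j = m))"

end

theory Submission imports Defs begin

definition SA :: "nat \<Rightarrow> nat set" where "SA k = (\<lambda>j. 3*j+2) ` {1..k}"
definition SA' :: "nat \<Rightarrow> nat set" where "SA' k = (\<lambda>j. 3*j+1) ` {1..k}"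
definition SB :: "nat \<Rightarrow> nat set" where "SB k = insert 1 ((\<lambda>j. 3*j) ` {1..k})"

lemma intA:
  assumes "k \<ge> 1" "h \<in> {1..3*k+2}" "h \<notin> {2,3}"
  shows "h \<in> SA k \<or> (\<exists>u\<in>SA k. cycle_adj (3*k+2) u h)"
proof -
  obtain q r where hq: "h = 3*q + r" "r < 3" by (metis mod_less_divisor mult_div_mod_eq zero_less_numeral)
  show ?thesis
  proof (cases "h = 1")
    case True
    have "3*k+2 \<in> SA k" unfolding SA_def using assms(1) by auto
    moreover have "cycle_adj (3*k+2) (3*k+2) h" using True unfolding cycle_adj_def by auto
    ultimately show ?thesis by blast
  next
    case False
    then have h4: "h \<ge> 4" using assms by auto
    consider "r = 0" | "r = 1" | "r = 2" using hq by linarith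
    then show ?thesis
    proof cases
      case 1
      have "h - 1 \<in> SA k" unfolding SA_def using hq 1 h4 assms
        by (auto intro!: image_eqI[where x="q - 1"]; presburger)
      moreover have "cycle_adj (3*k+2) (h-1) h" using assms h4 unfolding cycle_adj_def by auto
      ultimately show ?thesis by blast
    next
      case 2
      have "h + 1 \<in> SA k" unfolding SA_def using hq 2 h4 assms
        by (auto intro!: image_eqI[where x="q"])
      moreover have "cycle_adj (3*k+2) (h+1) h" using assms h4 hq 2 unfolding cycle_adj_def by auto
      ultimately show ?thesis by blast
    next
      case 3
      have "h \<in> SA k" unfolding SA_def using hq 3 h4 assms
        by (auto intro!: image_eqI[where x="q"])
      then show ?thesis by blast
    qed
  qed
qed

lemma intA':
  assumes "k \<ge> 1" "h \<in> {1..3*k+2}" "h \<notin> {1,2}"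
  shows "h \<in> SA' k \<or> (\<exists>u\<in>SA' k. cycle_adj (3*k+2) u h)"
proof -
  obtain q r where hq: "h = 3*q + r" "r < 3" by (metis mod_less_divisor mult_div_mod_eq zero_less_numeral)
  have h3: "h \<ge> 3" using assms by auto
  consider "r = 0" | "r = 1" | "r = 2" using hq by linarith
  then show ?thesis
  proof cases
    case 1
    have "h + 1 \<in> SA' k" unfolding SA'_def using hq 1 h3 assms
      by (auto intro!: image_eqI[where x="q"]; presburger)
    moreover have "cycle_adj (3*k+2) (h+1) h" using assms h3 hq 1 unfolding cycle_adj_def by (auto; presburger)
    ultimately show ?thesis by blast
  next
    case 2
    have "h \<in> SA' k" unfolding SA'_def using hq 2 h3 assms
      by (auto intro!: image_eqI[where x="q"])
    then show ?thesis by blast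
  next
    case 3
    have "h - 1 \<in> SA' k" unfolding SA'_def using hq 3 h3 assms
      by (auto intro!: image_eqI[where x="q"])
    moreover have "cycle_adj (3*k+2) (h-1) h" using assms h3 unfolding cycle_adj_def by auto
    ultimately show ?thesis by blast
  qed
qed

lemma intB:
  assumes "k \<ge> 1" "h \<in> {1..3*k+2}"
  shows "h \<in> SB k \<or> (\<exists>u\<in>SB k. cycle_adj (3*k+2) u h)"
proof -
  obtain q r where hq: "h = 3*q + r" "r < 3" by (metis mod_less_divisor mult_div_mod_eq zero_less_numeral)
  show ?thesis
  proof (cases "h = 1")
    case True then show ?thesis unfolding SB_def by auto
  next
    case False
    then have h2: "h \<ge> 2" using assms by auto
    consider "r = 0" | "r = 1" | "r = 2" using hq by linarith
    then show ?thesis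
    proof cases
      case 1
      have "h \<in> SB k" unfolding SB_def using hq 1 h2 assms
        by (auto intro!: image_eqI[where x="q"])
      then show ?thesis by blast
    next
      case 2
      have "h - 1 \<in> SB k" unfolding SB_def using hq 2 h2 assms
        by (auto intro!: image_eqI[where x="q"])
      moreover have "cycle_adj (3*k+2) (h-1) h" using assms h2 unfolding cycle_adj_def by auto
      ultimately show ?thesis by blast
    next
      case 3
      show ?thesis
      proof (cases "h = 3*k+2")
        case True
        have "cycle_adj (3*k+2) 1 h" using True unfolding cycle_adj_def by auto
        then show ?thesis unfolding SB_def by auto
      next
        case False
        have "h + 1 \<in> SB k" unfolding SB_def using hq 3 False assms
          by (auto intro!: image_eqI[where x="q+1"])
        moreover have "cycle_adj (3*k+2) (h+1) h" using assms False hq 3 unfolding cycle_adj_def by auto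
        ultimately show ?thesis by blast
      qed
    qed
  qed
qed

lemma mod4A: assumes "i mod 4 = (1::nat)" shows "(i-1) mod 4 = 0 \<and> (i+1) mod 4 = 2"
proof -
  have "i = 4*(i div 4) + 1" using mult_div_mod_eq[of 4 i] assms by simp
  then obtain q where q: "i = 4*q+1" by blast
  have "i - 1 = 4*q" "i+1 = 4*q+2" using q by simp_all
  moreover have "(4*q) mod 4 = (0::nat)" "(4*q+2) mod 4 = (2::nat)" by presburger+
  ultimately show ?thesis by simp
qed
lemma mod4B: assumes "i mod 4 = (3::nat)" shows "(i-1) mod 4 = 2 \<and> (i+1) mod 4 = 0"
proof -
  have "i = 4*(i div 4) + 3" using mult_div_mod_eq[of 4 i] assms by simp
  then obtain q where q: "i = 4*q+3" by blast
  have "i - 1 = 4*q+2" "i+1 = 4*(q+1)" using q by simp_all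
  moreover have "(4*(q+1)) mod 4 = (0::nat)" "(4*q+2) mod 4 = (2::nat)" by presburger+
  ultimately show ?thesis by simp
qed
lemma card_SA: "card (SA k) \<le> k" unfolding SA_def using card_image_le[of "{1..k}" "\<lambda>j. 3*j+2"] by simp
lemma card_SA': "card (SA' k) \<le> k" unfolding SA'_def using card_image_le[of "{1..k}" "\<lambda>j. 3*j+1"] by simp
lemma card_SB: "card (SB k) \<le> k + 1" unfolding SB_def
  using card_image_le[of "{1..k}" "\<lambda>j. 3*j"] card_insert_le_m1 
  by (metis One_nat_def Suc_eq_plus1 card.infinite card_atLeastAtMost card_insert_if diff_Suc_1 finite_atLeastAtMost finite_imageI le_SucI not_less_eq_eq)
lemma fin_S: "finite (SA k)" "finite (SA' k)" "finite (SB k)" unfolding SA_def SA'_def SB_def by auto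
lemma SB13: "k \<ge> 1 \<Longrightarrow> 1 \<in> SB k \<and> 3 \<in> SB k" unfolding SB_def by (auto intro!: image_eqI[where x=1])
lemma sub_N: "k \<ge> 1 \<Longrightarrow> SA k \<subseteq> {1..3*k+2} \<and> SA' k \<subseteq> {1..3*k+2} \<and> SB k \<subseteq> {1..3*k+2}"
  unfolding SA_def SA'_def SB_def by auto

theorem mainTheorem10:
  fixes n k :: nat and f :: "nat \<Rightarrow> nat"
  assumes "n \<ge> 3" and "k \<ge> 1"
    and "\<And>i. f i = (if i mod 4 = 1 then 1 else if i mod 4 = 2 then 2 else 3)"
  shows "int (domination_number (sierpinski_vertices (cycle_vertices n) (cycle_vertices (3*k+2)))
              (sierpinski_adj (cycle_adj n) (cycle_adj (3*k+2)) f))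
         \<le> int (k*n) + \<lfloor>real n / 2\<rfloor> + \<lceil>real n / 4\<rceil> - \<lfloor>real n / 4\<rfloor>"
proof -
  note n3 = assms(1) and k1 = assms(2) and fdef = assms(3)
  define N where "N = 3*k+2"
  define V where "V = sierpinski_vertices (cycle_vertices n) (cycle_vertices N)"
  define E where "E = sierpinski_adj (cycle_adj n) (cycle_adj N) f"
  define tp :: "nat \<Rightarrow> nat" where "tp i = (if even i \<or> (odd n \<and> i = n) \<or> (n mod 4 = 2 \<and> i = 1) then 2
     else if n mod 4 = 1 \<and> i = 1 then 1 else 0)" for i
  define S :: "nat \<Rightarrow> nat set" where "S t = (if t = 0 then SA k else if t = 1 then SA' k else SB k)" for t
  define D where "D = Sigma {1..n} (\<lambda>i. S (tp i))"
  have bridge: "\<exists>j. cycle_adj n j i \<and> tp j = 2 \<and> h = f j \<and> f i \<in> {1,3}"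
    if i: "i \<in> {1..n}" "tp i \<noteq> 2" and h: "h \<in> (if tp i = 0 then {2,3} else {1,2})" for i h
  proof -
    have oi: "odd i" using i(2) unfolding tp_def by auto
    then have "i mod 4 = 1 \<or> i mod 4 = 3" by presburger
    then have fi: "f i \<in> {1,3}" using fdef by auto
    show ?thesis
    proof (cases "i = 1")
      case True
      have n2: "n mod 4 \<noteq> 2" using i(2) True unfolding tp_def by auto
      show ?thesis
      proof (cases "h = 2")
        case h2: True
        have "cycle_adj n 2 1" using n3 unfolding cycle_adj_def by auto
        moreover have "tp 2 = 2" unfolding tp_def by auto
        moreover have "f 2 = 2" using fdef by simp
        ultimately show ?thesis using True h2 fi by (intro exI[where x=2]) auto
      next
        case False
        have "cycle_adj n n 1" using n3 unfolding cycle_adj_def by auto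
        moreover have "tp n = 2" unfolding tp_def by auto
        moreover have "h = f n"
        proof (cases "n mod 4 = 1")
          case True
          then have "tp 1 = 1" using n3 unfolding tp_def by auto
          then show ?thesis using h False \<open>i = 1\<close> True fdef[of n] by auto
        next
          case nm: False
          then have "tp 1 = 0" unfolding tp_def using n2 by auto
          moreover have "n mod 4 = 0 \<or> n mod 4 = 3" using nm n2 by presburger
          ultimately show ?thesis using h False \<open>i = 1\<close> fdef[of n] by auto
        qed
        ultimately show ?thesis using True fi by (intro exI[where x=n]) auto
      qed
    next
      case False
      have "i \<noteq> n" using i(2) oi unfolding tp_def by auto
      then have in_: "1 < i" "i < n" using i(1) False by auto
      have t0: "tp i = 0" using i(2) False unfolding tp_def by auto
      have a1: "cycle_adj n (i-1) i" "cycle_adj n (i+1) i" using in_ unfolding cycle_adj_def by auto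
      have t2: "tp (i-1) = 2" "tp (i+1) = 2" using oi in_ unfolding tp_def by auto
      have "i mod 4 = 1 \<or> i mod 4 = 3" using oi by presburger
      then have "{f (i-1), f (i+1)} = {2,3}"
      proof
        assume "i mod 4 = 1"
        then have "(i-1) mod 4 = 0" "(i+1) mod 4 = 2" using mod4A by blast+
        then have "f (i-1) = 3" "f (i+1) = 2" using fdef[of "i-1"] fdef[of "i+1"] by simp_all
        then show ?thesis by auto
      next
        assume "i mod 4 = 3"
        then have "(i-1) mod 4 = 2" "(i+1) mod 4 = 0" using mod4B by blast+
        then have "f (i-1) = 2" "f (i+1) = 3" using fdef[of "i-1"] fdef[of "i+1"] by simp_all
        then show ?thesis by auto
      qed
      then have "h = f (i-1) \<or> h = f (i+1)" using h t0 by auto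
      then show ?thesis
      proof
        assume "h = f (i-1)" then show ?thesis using a1 t2 fi by (intro exI[where x="i-1"]) auto
      next
        assume "h = f (i+1)" then show ?thesis using a1 t2 fi by (intro exI[where x="i+1"]) auto
      qed
    qed
  qed
  have tp3: "tp j = 0 \<or> tp j = 1 \<or> tp j = 2" for j unfolding tp_def by auto
  have domset: "dominating_set V E D"
    unfolding dominating_set_def
  proof (intro conjI ballI)
    have "S t \<subseteq> {1..N}" for t unfolding S_def N_def using sub_N[OF k1] by auto
    then show "D \<subseteq> V" unfolding D_def V_def sierpinski_vertices_def cycle_vertices_def by auto
  next
    fix v assume "v \<in> V"
    then obtain i h where v: "v = (i,h)" "i \<in> {1..n}" "h \<in> {1..N}"
      unfolding V_def sierpinski_vertices_def cycle_vertices_def by auto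
    have internal: "v \<in> D \<or> (\<exists>u\<in>D. E u v)" if pre: "h \<in> S (tp i) \<or> (\<exists>u\<in>S (tp i). cycle_adj N u h)"
    proof (cases "h \<in> S (tp i)")
      case True then show ?thesis using v unfolding D_def by auto
    next
      case False
      then obtain u where u: "u \<in> S (tp i)" "cycle_adj N u h" using pre by blast
      have "(i,u) \<in> D" using u v unfolding D_def by auto
      moreover have "E (i,u) v" using u v unfolding E_def sierpinski_adj_def by auto
      ultimately show ?thesis by blast
    qed
    show "v \<in> D \<or> (\<exists>u\<in>D. E u v)"
    proof (cases "tp i = 2 \<or> h \<notin> (if tp i = 0 then {2,3} else {1,2})")
      case True
      then consider "tp i = 2" | "tp i = 0" "h \<notin> {2,3}" | "tp i = 1" "h \<notin> {1,2}"
        using tp3[of i] by (auto split: if_splits)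
      then show ?thesis
      proof cases
        case 1 then show ?thesis using internal intB[OF k1, of h] v(3) unfolding S_def N_def by auto
      next
        case 2 then show ?thesis using internal intA[OF k1, of h] v(3) unfolding S_def N_def by auto
      next
        case 3 then show ?thesis using internal intA'[OF k1, of h] v(3) unfolding S_def N_def by auto
      qed
    next
      case False
      then obtain j where j: "cycle_adj n j i" "tp j = 2" "h = f j" "f i \<in> {1,3}"
        using bridge[OF v(2)] by blast
      have "(j, f i) \<in> D" using j SB13[OF k1] unfolding D_def S_def cycle_adj_def by auto
      moreover have "E (j, f i) v" using j v unfolding E_def sierpinski_adj_def by auto
      ultimately show ?thesis by blast
    qed
  qed
  have cardS: "card (S t) \<le> k + (if t = 2 then 1 else 0)" if "t = 0 \<or> t = 1 \<or> t = 2" for t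
    using that card_SA[of k] card_SA'[of k] card_SB[of k] unfolding S_def by auto
  have finS: "finite (S t)" for t unfolding S_def using fin_S by auto
  have "card D = (\<Sum>i\<in>{1..n}. card (S (tp i)))" unfolding D_def using finS by simp
  also have "\<dots> \<le> (\<Sum>i\<in>{1..n}. k + of_bool (tp i = 2))"
  proof (rule sum_mono)
    fix i
    have "card (S (tp i)) \<le> k + (if tp i = 2 then 1 else 0)" using cardS tp3 by blast
    then show "card (S (tp i)) \<le> k + of_bool (tp i = 2)" by (cases "tp i = 2") auto
  qed
  also have "\<dots> = k*n + card ({1..n} \<inter> {i. tp i = 2})"
    by (simp add: sum.distrib)
  also have "{1..n} \<inter> {i. tp i = 2} = {i\<in>{1..n}. tp i = 2}" by auto
  finally have cD: "card D \<le> k*n + card {i\<in>{1..n}. tp i = 2}" .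
  define Ex :: "nat set" where "Ex = (if odd n then {n} else if n mod 4 = 2 then {1} else {})"
  have "{i\<in>{1..n}. tp i = 2} \<subseteq> ((\<lambda>j. 2*j) ` {1..n div 2}) \<union> Ex"
  proof
    fix i assume "i \<in> {i\<in>{1..n}. tp i = 2}"
    then have i: "i \<in> {1..n}" "tp i = 2" by auto
    show "i \<in> ((\<lambda>j. 2*j) ` {1..n div 2}) \<union> Ex"
    proof (cases "even i")
      case True
      then obtain j where "i = 2*j" by blast
      moreover have "j \<in> {1..n div 2}" using i calculation by auto
      ultimately show ?thesis by auto
    next
      case False
      then have "(odd n \<and> i = n) \<or> (n mod 4 = 2 \<and> i = 1)" using i(2) unfolding tp_def by (auto split: if_splits)
      moreover have "n mod 4 = 2 \<Longrightarrow> even n" by presburger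
      ultimately show ?thesis unfolding Ex_def by auto
    qed
  qed
  then have "card {i\<in>{1..n}. tp i = 2} \<le> card ((\<lambda>j. 2*j) ` {1..n div 2} \<union> Ex)"
    by (rule card_mono[rotated]) (simp add: Ex_def)
  also have "\<dots> \<le> card ((\<lambda>j. 2*j) ` {1..n div 2}) + card Ex" by (rule card_Un_le)
  also have "\<dots> \<le> n div 2 + card Ex" using card_image_le[of "{1..n div 2}" "\<lambda>j. 2*j"] by simp
  also have "card Ex \<le> (if n mod 4 = 0 then 0 else 1)"
  proof -
    have "n mod 4 = 0 \<Longrightarrow> even n \<and> n mod 4 \<noteq> 2" by presburger
    then show ?thesis unfolding Ex_def by auto
  qed
  finally have cD2: "card D \<le> k*n + n div 2 + (if n mod 4 = 0 then 0 else 1)" using cD by simp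
  have finV: "finite V" unfolding V_def sierpinski_vertices_def cycle_vertices_def by simp
  have "{card D' | D'. dominating_set V E D'} \<subseteq> {..card V}"
    using finV card_mono unfolding dominating_set_def by auto
  then have fin: "finite {card D' | D'. dominating_set V E D'}" using finite_subset by blast
  have "domination_number V E \<le> card D"
    unfolding domination_number_def using fin domset by (intro Min_le) auto
  then have dle: "domination_number V E \<le> k*n + n div 2 + (if n mod 4 = 0 then 0 else 1)" using cD2 by linarith
  have fl2: "\<lfloor>real n / 2\<rfloor> = int (n div 2)"
    using floor_divide_of_nat_eq[of n 2] by simp
  have cf: "\<lceil>real n / 4\<rceil> - \<lfloor>real n / 4\<rfloor> \<ge> (if n mod 4 = 0 then 0 else 1)"
  proof (cases "n mod 4 = 0")
    case True then show ?thesis by simp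
  next
    case False
    have "real n / 4 \<noteq> of_int \<lfloor>real n / 4\<rfloor>"
    proof
      assume eq: "real n / 4 = of_int \<lfloor>real n / 4\<rfloor>"
      have fl4: "\<lfloor>real n / 4\<rfloor> = int (n div 4)" using floor_divide_of_nat_eq[of n 4] by simp
      then have "real n = 4 * real (n div 4)" using eq by simp
      then have "n = 4 * (n div 4)" by linarith
      then show False using False by presburger
    qed
    then show ?thesis using False ceiling_altdef[of "real n / 4"] by simp
  qed
  have "int (domination_number V E) \<le> int (k*n) + int (n div 2) + (if n mod 4 = 0 then 0 else 1)"
  proof -
    have "int (domination_number V E) \<le> int (k*n + n div 2 + (if n mod 4 = 0 then 0 else 1))"
      using dle by (simp only: of_nat_le_iff)
    then show ?thesis by (cases "n mod 4 = 0") simp_all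
  qed
  then show ?thesis using fl2 cf unfolding V_def E_def N_def by linarith
qed
end
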